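(* Fix $1<s<3/2$ and $z\in\mathbb{D}$, and for $N\ge1$ let \[ I_{N,1}=\int_{\mathcal{U}_N(z)^2}T_z(x_1)^sT_z(x_2)^sK(x_1,x_1)K(x_2,x_2)K(x_1,x_2)\,\mathrm{d}\mu(x_1)\,\mathrm{d}\mu(x_2). \] Then \[ \lim_{N\to\infty}I_{N,1}=\frac{4}{(1-|z|^2)^2}\Big(\int_0^1\frac{(1-r)^{s-2}}{(1+r)^{s+2}}\,r\,\mathrm{d}r\Big)^2. \]
   Context: $\mathbb{D}$ is the open unit disk, $\mathrm{d}\mu=\frac{1}{\pi}\mathrm{d}x\,\mathrm{d}y$, $K(z,w)=(1-z\overline{w})^{-2}$. $\varphi_z(x)=\frac{z-x}{1-\overline{z}x}$, $d_{\mathrm{h}}(z,x)=\log\frac{1+|\varphi_z(x)|}{1-|\varphi_z(x)|}$, $T_z(x)=e^{-d_{\mathrm{h}}(z,x)}=\frac{1-|\varphi_z(x)|}{1+|\varphi_z(x)|}$, and $\mathcal{U}_N(z)=\{x\in\mathbb{D}:d_{\mathrm{h}}(z,x)<N\}$. *)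

theory Defs
  imports "HOL-Analysis.Analysis"
begin

definition unit_disk :: "complex set" where
  "unit_disk = ball 0 1"

definition dmu :: "complex measure" where
  "dmu = density lborel (\<lambda>_. ennreal (1 / pi))"

definition bergK :: "complex \<Rightarrow> complex \<Rightarrow> complex" where
  "bergK z w = 1 / (1 - z * cnj w)\<^sup>2"

definition mobius :: "complex \<Rightarrow> complex \<Rightarrow> complex" where
  "mobius z x = (z - x) / (1 - cnj z * x)"

definition hdist :: "complex \<Rightarrow> complex \<Rightarrow> real" where
  "hdist z x = ln ((1 + cmod (mobius z x)) / (1 - cmod (mobius z x)))"

definition Tfun :: "complex \<Rightarrow> complex \<Rightarrow> real" where
  "Tfun z x = (1 - cmod (mobius z x)) / (1 + cmod (mobius z x))"

definition Uset :: "real \<Rightarrow> complex \<Rightarrow> complex set" where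
  "Uset N z = {x \<in> unit_disk. hdist z x < N}"

definition I_N1 :: "real \<Rightarrow> complex \<Rightarrow> real \<Rightarrow> complex" where
  "I_N1 s z N = (LINT p : Uset N z \<times> Uset N z | (dmu \<Otimes>\<^sub>M dmu).
      complex_of_real (Tfun z (fst p) powr s * Tfun z (snd p) powr s)
      * bergK (fst p) (fst p) * bergK (snd p) (snd p) * bergK (fst p) (snd p))"

end

theory Submission
  imports Defs "HOL-Complex_Analysis.Cauchy_Integral_Formula" "HOL-Real_Asymp.Real_Asymp"
begin

lemma has_integral_iso:
  fixes g :: "'b::euclidean_space \<Rightarrow> 'a::euclidean_space" and h :: "'a \<Rightarrow> 'b"
    and f :: "'a \<Rightarrow> 'c::banach"
  assumes hg: "\<And>x. h (g x) = x" and gh: "\<And>y. g (h y) = y"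
    and contg: "\<And>x. continuous (at x) g"
    and normg: "\<And>x. norm (g x) = norm x"
    and gbox: "\<And>u v. \<exists>w z. g ` cbox u v = cbox w z"
    and hbox: "\<And>u v. \<exists>w z. h ` cbox u v = cbox w z"
    and gcont: "\<And>u v. measure lborel (g ` cbox u v) = measure lborel (cbox u v)"
    and f: "(f has_integral i) S"
  shows "((\<lambda>x. f (g x)) has_integral i) (g -` S)"
proof -
  define F where "F = (\<lambda>y. if y \<in> S then f y else 0)"
  have eqF: "(\<lambda>x. if x \<in> g -` S then f (g x) else 0) = (\<lambda>x. F (g x))"
    by (auto simp: F_def)
  have hbox': "cbox a b = h ` (g ` cbox a b)" for a b
    by (auto simp: image_iff hg)
  have tw: "((\<lambda>x. F (g x)) has_integral I) (cbox a b)"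
    if "(F has_integral I) (g ` cbox a b)" for a b I
  proof -
    obtain w z where wz: "g ` cbox a b = cbox w z" using gbox by blast
    have "((\<lambda>x. F (g x)) has_integral (1/1) *\<^sub>R I) (h ` cbox w z)"
      by (rule has_integral_twiddle[where g=g and h=h]) (use that wz hg gh contg gbox hbox gcont in auto)
    then show ?thesis using hbox'[of a b] wz by simp
  qed
  have Fint: "\<And>a b. F integrable_on cbox a b"
    and Flim: "\<forall>e>0. \<exists>B>0. \<forall>a b. ball 0 B \<subseteq> cbox a b \<longrightarrow> norm (integral (cbox a b) F - i) < e"
    using f unfolding has_integral_alt'[of f i S] F_def by auto
  show ?thesis
    unfolding has_integral_alt' eqF
  proof (intro conjI allI impI)
    fix a b
    obtain w z where wz: "g ` cbox a b = cbox w z" using gbox by blast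
    show "(\<lambda>x. F (g x)) integrable_on cbox a b"
      using tw[where a=a and b=b and I="integral (cbox w z) F"] Fint[of w z] wz
      by (metis integrable_integral integrable_on_def)
  next
    fix e :: real assume "e > 0"
    then obtain B where B: "B > 0" "\<And>a b. ball 0 B \<subseteq> cbox a b \<Longrightarrow> norm (integral (cbox a b) F - i) < e"
      using Flim by blast
    show "\<exists>B>0. \<forall>a b::'b. ball 0 B \<subseteq> cbox a b \<longrightarrow> norm (integral (cbox a b) (\<lambda>x. F (g x)) - i) < e"
    proof (intro exI[of _ B] conjI allI impI)
      fix a b :: 'b assume sub: "ball 0 B \<subseteq> cbox a b"
      obtain w z where wz: "g ` cbox a b = cbox w z" using gbox by blast
      have "ball 0 B \<subseteq> cbox w z"
      proof
        fix y assume "y \<in> ball (0::'a) B"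
        then have "h y \<in> ball 0 B" by (metis dist_0_norm mem_ball normg gh)
        then have "h y \<in> cbox a b" using sub by blast
        then have "g (h y) \<in> g ` cbox a b" by (rule imageI)
        then show "y \<in> cbox w z" using wz gh by simp
      qed
      then have "norm (integral (cbox w z) F - i) < e" using B by blast
      moreover have "integral (cbox a b) (\<lambda>x. F (g x)) = integral (cbox w z) F"
      proof -
        have "(F has_integral integral (cbox w z) F) (g ` cbox a b)"
          unfolding wz by (rule integrable_integral[OF Fint])
        from tw[OF this] show ?thesis by (rule integral_unique)
      qed
      ultimately show "norm (integral (cbox a b) (\<lambda>x. F (g x)) - i) < e" by simp
    next
      show "B > 0" by (rule B(1))
    qed
  qed
qed


definition c2v :: "complex \<Rightarrow> real^2" where "c2v c = vector [Re c, Im c]"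
definition v2c :: "real^2 \<Rightarrow> complex" where "v2c v = Complex (v$1) (v$2)"

lemma c2v_nth [simp]: "c2v c $ 1 = Re c" "c2v c $ 2 = Im c"
  by (simp_all add: c2v_def)
lemma v2c_c2v [simp]: "v2c (c2v c) = c" by (simp add: v2c_def complex_eq_iff)
lemma c2v_v2c [simp]: "c2v (v2c v) = v"
  by (simp add: vec_eq_iff forall_2 v2c_def)
lemma Re_v2c [simp]: "Re (v2c v) = v$1" and Im_v2c [simp]: "Im (v2c v) = v$2"
  by (simp_all add: v2c_def)

lemma linear_c2v: "linear c2v"
  by (rule linearI) (simp_all add: vec_eq_iff forall_2)
lemma linear_v2c: "linear v2c"
  by (rule linearI) (simp_all add: complex_eq_iff)
lemma norm_c2v [simp]: "norm (c2v c) = norm c"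
  by (simp add: norm_vec_def L2_set_def UNIV_2 cmod_def)
lemma norm_v2c [simp]: "norm (v2c v) = norm v"
  by (metis c2v_v2c norm_c2v)

lemma mem_cbox_complex: "x \<in> cbox a b \<longleftrightarrow> Re a \<le> Re x \<and> Re x \<le> Re b \<and> Im a \<le> Im x \<and> Im x \<le> Im b"
  by (auto simp: mem_box Basis_complex_def)
lemma mem_cbox_2: "x \<in> cbox a (b::real^2) \<longleftrightarrow> a$1 \<le> x$1 \<and> x$1 \<le> b$1 \<and> a$2 \<le> x$2 \<and> x$2 \<le> b$2"
  by (auto simp: mem_box_cart forall_2)

lemma v2c_cbox: "v2c ` cbox u v = cbox (v2c u) (v2c v)"
proof (rule set_eqI)
  fix x show "x \<in> v2c ` cbox u v \<longleftrightarrow> x \<in> cbox (v2c u) (v2c v)"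
    by (auto simp: mem_cbox_complex mem_cbox_2 image_iff intro!: bexI[of _ "c2v x"])
qed
lemma c2v_cbox: "c2v ` cbox u v = cbox (c2v u) (c2v v)"
proof (rule set_eqI)
  fix x show "x \<in> c2v ` cbox u v \<longleftrightarrow> x \<in> cbox (c2v u) (c2v v)"
    by (auto simp: mem_cbox_complex mem_cbox_2 image_iff intro!: bexI[of _ "v2c x"])
qed
lemma content_complex: "measure lborel (cbox a (b::complex)) = (if Re a \<le> Re b \<and> Im a \<le> Im b then (Re b - Re a) * (Im b - Im a) else 0)"
  by (auto simp: content_cbox_if Basis_complex_def mem_cbox_complex box_eq_empty inner_complex_def)
lemma content_2: "measure lborel (cbox a (b::real^2)) = (if a$1 \<le> b$1 \<and> a$2 \<le> b$2 then (b$1 - a$1) * (b$2 - a$2) else 0)"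
proof -
  have e: "cbox a b = {} \<longleftrightarrow> \<not> (a$1 \<le> b$1 \<and> a$2 \<le> b$2)"
  proof -
    have "(\<exists>i. b$i < a$i) \<longleftrightarrow> (b$1 < a$1 \<or> b$2 < a$2)"
    proof
      assume "\<exists>i. b$i < a$i"
      then obtain i where "b$i < a$i" by blast
      then show "b$1 < a$1 \<or> b$2 < a$2" using exhaust_2[of i] by auto
    qed auto
    then show ?thesis unfolding interval_eq_empty_cart by auto
  qed
  show ?thesis unfolding content_cbox_if_cart e by (simp add: UNIV_2)
qed

lemma has_integral_v2c:
  fixes f :: "complex \<Rightarrow> 'c::banach"
  shows "(f has_integral i) S \<longleftrightarrow> ((\<lambda>x. f (v2c x)) has_integral i) (v2c -` S)"
proof
  assume fi: "(f has_integral i) S"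
  show "((\<lambda>x. f (v2c x)) has_integral i) (v2c -` S)"
  proof (rule has_integral_iso[where g=v2c and h=c2v and f=f, OF _ _ _ _ _ _ _ fi])
    show "isCont v2c x" for x by (rule linear_continuous_at[OF linear_conv_bounded_linear[THEN iffD1, OF linear_v2c]])
    show "\<exists>w z. v2c ` cbox u v = cbox w z" for u v using v2c_cbox by blast
    show "\<exists>w z. c2v ` cbox u v = cbox w z" for u v using c2v_cbox by blast
    show "measure lborel (v2c ` cbox u v) = measure lborel (cbox u v)" for u v
      by (simp add: v2c_cbox content_complex content_2)
  qed simp_all
next
  assume fi2: "((\<lambda>x. f (v2c x)) has_integral i) (v2c -` S)"
  show "(f has_integral i) S"
  proof -
    have "isCont c2v x" for x by (rule linear_continuous_at[OF linear_conv_bounded_linear[THEN iffD1, OF linear_c2v]])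
    moreover have "\<exists>w z. v2c ` cbox u v = cbox w z" for u v using v2c_cbox by blast
    moreover have "\<exists>w z. c2v ` cbox u v = cbox w z" for u v using c2v_cbox by blast
    moreover have "measure lborel (c2v ` cbox u v) = measure lborel (cbox u v)" for u v
      by (simp add: c2v_cbox content_complex content_2)
    ultimately have "((\<lambda>x. f (v2c (c2v x))) has_integral i) (c2v -` (v2c -` S))"
      by (intro has_integral_iso[where g=c2v and h=v2c, OF _ _ _ _ _ _ _ fi2]) simp_all
    moreover have "c2v -` (v2c -` S) = S" by auto
    ultimately show ?thesis by simp
  qed
qed


lemma integrable_v2c:
  fixes f :: "complex \<Rightarrow> 'c::banach"
  shows "f integrable_on S \<longleftrightarrow> (\<lambda>x. f (v2c x)) integrable_on (v2c -` S)"
  unfolding integrable_on_def using has_integral_v2c by blast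

lemma has_integral_c2v_v2c:
  fixes f :: "complex \<Rightarrow> complex"
  shows "(f has_integral i) S \<longleftrightarrow> ((\<lambda>x. c2v (f (v2c x))) has_integral c2v i) (v2c -` S)"
proof
  have bl: "bounded_linear c2v" by (simp add: linear_conv_bounded_linear[symmetric] linear_c2v)
  assume "(f has_integral i) S"
  then have "((\<lambda>x. f (v2c x)) has_integral i) (v2c -` S)" using has_integral_v2c by blast
  from has_integral_linear[OF this bl] show "((\<lambda>x. c2v (f (v2c x))) has_integral c2v i) (v2c -` S)"
    by (simp add: o_def)
next
  have bl: "bounded_linear v2c" by (simp add: linear_conv_bounded_linear[symmetric] linear_v2c)
  assume "((\<lambda>x. c2v (f (v2c x))) has_integral c2v i) (v2c -` S)"
  from has_integral_linear[OF this bl] have "((\<lambda>x. f (v2c x)) has_integral i) (v2c -` S)"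
    by (simp add: o_def)
  then show "(f has_integral i) S" using has_integral_v2c by blast
qed

lemma c2v_inj [simp]: "c2v a = c2v b \<longleftrightarrow> a = b"
  by (metis v2c_c2v)

lemma c2v_0 [simp]: "c2v 0 = 0"
  using linear_0[OF linear_c2v] .

lemma integral_c2v_v2c:
  fixes f :: "complex \<Rightarrow> complex"
  shows "integral (v2c -` S) (\<lambda>x. c2v (f (v2c x))) = c2v (integral S f)"
proof (cases "f integrable_on S")
  case True
  then show ?thesis using has_integral_c2v_v2c by (blast intro: integral_unique)
next
  case False
  then have "\<not> (\<lambda>x. c2v (f (v2c x))) integrable_on (v2c -` S)"
    using has_integral_c2v_v2c unfolding integrable_on_def
    by (metis c2v_v2c)
  then show ?thesis using False by (simp add: not_integrable_integral)
qed

lemma absint_c2v_v2c: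
  fixes f :: "complex \<Rightarrow> complex"
  shows "f absolutely_integrable_on S \<longleftrightarrow> (\<lambda>x. c2v (f (v2c x))) absolutely_integrable_on (v2c -` S)"
proof -
  have 1: "f integrable_on S \<longleftrightarrow> (\<lambda>x. c2v (f (v2c x))) integrable_on (v2c -` S)"
    using has_integral_c2v_v2c unfolding integrable_on_def by (metis c2v_v2c)
  have 2: "(\<lambda>x. norm (f x)) integrable_on S \<longleftrightarrow> (\<lambda>x. norm (c2v (f (v2c x)))) integrable_on (v2c -` S)"
    using integrable_v2c[of "\<lambda>x. norm (f x)" S] by simp
  show ?thesis unfolding absolutely_integrable_on_def 1 2 ..
qed

definition jac :: "(complex \<Rightarrow> complex) \<Rightarrow> real" where
  "jac L = Re (L 1) * Im (L \<i>) - Re (L \<i>) * Im (L 1)"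

lemma v2c_axis1 [simp]: "v2c (axis 1 1) = 1" and v2c_axis2 [simp]: "v2c (axis 2 1) = \<i>"
  by (simp_all add: v2c_def axis_def complex_eq_iff)

lemma det_jac: "det (matrix (\<lambda>h. c2v (L (v2c h)))) = jac L"
  by (simp add: det_2 matrix_def jac_def)

lemma cv_complex:
  fixes f :: "complex \<Rightarrow> complex" and g :: "complex \<Rightarrow> complex"
  assumes S: "open S" and der: "\<And>x. x \<in> S \<Longrightarrow> (g has_derivative g' x) (at x)" and inj: "inj_on g S"
  shows "(\<lambda>x. \<bar>jac (g' x)\<bar> *\<^sub>R f (g x)) absolutely_integrable_on S \<and>
           integral S (\<lambda>x. \<bar>jac (g' x)\<bar> *\<^sub>R f (g x)) = b
     \<longleftrightarrow> f absolutely_integrable_on (g ` S) \<and> integral (g ` S) f = b"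
proof -
  define S' where "S' = v2c -` S"
  define G where "G = (\<lambda>x. c2v (g (v2c x)))"
  define G' where "G' = (\<lambda>x h. c2v (g' (v2c x) (v2c h)))"
  define F where "F = (\<lambda>x. c2v (f (v2c x)))"
  have blc: "bounded_linear c2v" by (simp add: linear_conv_bounded_linear[symmetric] linear_c2v)
  have blv: "bounded_linear v2c" by (simp add: linear_conv_bounded_linear[symmetric] linear_v2c)
  have contv: "continuous_on UNIV v2c"
    by (simp add: linear_continuous_on blv)
  have S'open: "open S'" unfolding S'_def
    using open_vimage[OF S contv] by simp
  have derG: "(G has_derivative G' x) (at x within S')" if "x \<in> S'" for x
  proof -
    have "(g has_derivative g' (v2c x)) (at (v2c x))" using der that by (simp add: S'_def)
    have "((\<lambda>x. g (v2c x)) has_derivative (\<lambda>h. g' (v2c x) (v2c h))) (at x)"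
      using has_derivative_compose[OF bounded_linear_imp_has_derivative[OF blv] \<open>(g has_derivative g' (v2c x)) (at (v2c x))\<close>]
      by (simp add: o_def)
    from has_derivative_compose[OF this bounded_linear_imp_has_derivative[OF blc]]
    have "(G has_derivative G' x) (at x)" by (simp add: G_def G'_def o_def)
    then show ?thesis by (rule has_derivative_at_withinI)
  qed
  have injG: "inj_on G S'"
  proof (rule inj_onI)
    fix x y assume xy: "x \<in> S'" "y \<in> S'" "G x = G y"
    then have "g (v2c x) = g (v2c y)" by (simp add: G_def)
    then have "v2c x = v2c y" using inj xy(1,2) unfolding inj_on_def S'_def by blast
    then have "c2v (v2c x) = c2v (v2c y)" by simp
    then show "x = y" by simp
  qed
  have det: "det (matrix (G' x)) = jac (g' (v2c x))" for x
    unfolding G'_def by (rule det_jac)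
  have S'leb: "S' \<in> sets lebesgue" using S'open by (simp add: borel_open sets_completionI_sets)
  note CV = has_absolute_integral_change_of_variables[OF S'leb derG injG, of F "c2v b"]
  have c2v_scale: "c2v (r *\<^sub>R z) = r *\<^sub>R c2v z" for r z
    by (simp add: vec_eq_iff forall_2)
  have eq1: "(\<lambda>x. \<bar>det (matrix (G' x))\<bar> *\<^sub>R F (G x)) = (\<lambda>x. c2v (\<bar>jac (g' (v2c x))\<bar> *\<^sub>R f (g (v2c x))))"
    by (simp add: det F_def G_def c2v_scale)
  have eq2: "G ` S' = v2c -` (g ` S)"
  proof (rule set_eqI)
    fix y show "y \<in> G ` S' \<longleftrightarrow> y \<in> v2c -` (g ` S)"
    proof
      assume "y \<in> G ` S'" then show "y \<in> v2c -` (g ` S)" by (auto simp: G_def S'_def)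
    next
      assume "y \<in> v2c -` (g ` S)"
      then obtain w where w: "w \<in> S" "v2c y = g w" by auto
      then have "c2v w \<in> S'" "y = G (c2v w)" by (simp_all add: S'_def G_def flip: w(2))
      then show "y \<in> G ` S'" by blast
    qed
  qed
  have CV2: "((\<lambda>x. c2v (\<bar>jac (g' (v2c x))\<bar> *\<^sub>R f (g (v2c x)))) absolutely_integrable_on S' \<and>
      integral S' (\<lambda>x. c2v (\<bar>jac (g' (v2c x))\<bar> *\<^sub>R f (g (v2c x)))) = c2v b) \<longleftrightarrow>
      (F absolutely_integrable_on (v2c -` (g ` S)) \<and> integral (v2c -` (g ` S)) F = c2v b)"
    using CV unfolding eq1 eq2 .
  show ?thesis
    using CV2 unfolding F_def S'_def
    unfolding absint_c2v_v2c[where f="\<lambda>y. \<bar>jac (g' y)\<bar> *\<^sub>R f (g y)" and S=S, symmetric]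
      integral_c2v_v2c[where f="\<lambda>y. \<bar>jac (g' y)\<bar> *\<^sub>R f (g y)" and S=S] 
      absint_c2v_v2c[symmetric] integral_c2v_v2c c2v_inj .
qed


definition p2c :: "real \<times> real \<Rightarrow> complex" where "p2c p = Complex (fst p) (snd p)"
definition c2p :: "complex \<Rightarrow> real \<times> real" where "c2p c = (Re c, Im c)"

lemma p2c_eq: "p2c p = of_real (fst p) + \<i> * of_real (snd p)"
  by (simp add: p2c_def complex_eq_iff)
lemma continuous_on_p2c: "continuous_on A p2c"
  unfolding p2c_eq by (intro continuous_intros)

lemma p2c_cbox: "p2c ` cbox u v = cbox (p2c u) (p2c v)"
proof -
  obtain a c where u: "u = (a, c)" by fastforce
  obtain b d where v: "v = (b, d)" by fastforce
  have "p2c = (\<lambda>(x,y). Complex x y)" by (auto simp: p2c_def fun_eq_iff)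
  then show ?thesis by (simp add: u v cbox_Pair_eq cbox_Complex_eq p2c_def)
qed
lemma c2p_cbox: "c2p ` cbox u v = cbox (c2p u) (c2p v)"
proof (rule set_eqI)
  fix x :: "real \<times> real"
  obtain x1 x2 where x: "x = (x1, x2)" by fastforce
  show "x \<in> c2p ` cbox u v \<longleftrightarrow> x \<in> cbox (c2p u) (c2p v)"
    by (auto simp: x c2p_def mem_cbox_complex image_iff intro!: bexI[of _ "Complex x1 x2"])
qed

lemma has_integral_p2c:
  fixes f :: "complex \<Rightarrow> 'c::banach"
  assumes fi: "(f has_integral i) S"
  shows "((\<lambda>x. f (p2c x)) has_integral i) (p2c -` S)"
proof (rule has_integral_iso[where g=p2c and h=c2p and f=f, OF _ _ _ _ _ _ _ fi])
  show "isCont p2c x" for x unfolding p2c_eq by (intro continuous_intros)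
  show "\<exists>w z. p2c ` cbox u v = cbox w z" for u v using p2c_cbox by blast
  show "\<exists>w z. c2p ` cbox u v = cbox w z" for u v using c2p_cbox by blast
  show "measure lborel (p2c ` cbox u v) = measure lborel (cbox u v)" for u v
  proof -
    obtain a c where u: "u = (a, c)" by fastforce
    obtain b d where v: "v = (b, d)" by fastforce
    have "p2c (a, c) = Complex a c" "p2c (b, d) = Complex b d" by (simp_all add: p2c_def)
    then show ?thesis unfolding u v p2c_cbox by (simp add: content_complex content_Pair)
  qed
  show "norm (p2c x) = norm x" for x
    using norm_Pair[of "fst x" "snd x"] by (simp add: p2c_def cmod_def)
qed (simp_all add: p2c_def c2p_def)

lemma integral_cbox_complex_fubini:
  fixes H :: "complex \<Rightarrow> 'c::banach"
  assumes "continuous_on (cbox (Complex a c) (Complex b d)) H"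
  shows "integral (cbox (Complex a c) (Complex b d)) H = integral {a..b} (\<lambda>x. integral {c..d} (\<lambda>y. H (Complex x y)))"
proof -
  have "H integrable_on cbox (Complex a c) (Complex b d)" using assms by (rule integrable_continuous)
  then have hi: "(H has_integral integral (cbox (Complex a c) (Complex b d)) H) (cbox (Complex a c) (Complex b d))"
    by (rule integrable_integral)
  have 1: "((\<lambda>x. H (p2c x)) has_integral integral (cbox (Complex a c) (Complex b d)) H) (cbox (a, c) (b, d))"
  proof -
    have "p2c -` cbox (Complex a c) (Complex b d) = cbox (a, c) (b, d)"
      by (auto simp: p2c_def mem_cbox_complex cbox_Pair_eq)
    then show ?thesis using has_integral_p2c[OF hi] by simp
  qed
  have cont: "continuous_on (cbox (a, c) (b, d)) (\<lambda>x. H (p2c x))"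
  proof (rule continuous_on_compose2[OF assms])
    show "continuous_on (cbox (a, c) (b, d)) p2c" by (rule continuous_on_p2c)
    have "p2c (a, c) = Complex a c" "p2c (b, d) = Complex b d" by (simp_all add: p2c_def)
    then show "p2c ` cbox (a, c) (b, d) \<subseteq> cbox (Complex a c) (Complex b d)" by (simp add: p2c_cbox)
  qed
  have "integral (cbox (a, c) (b, d)) (\<lambda>x. H (p2c x)) = integral (cbox a b) (\<lambda>x. integral (cbox c d) (\<lambda>y. H (p2c (x, y))))"
    by (rule integral_prod_continuous[OF cont])
  then show ?thesis using integral_unique[OF 1] by (simp add: p2c_def)
qed




lemma absint_of_lborel:
  fixes f :: "'a::euclidean_space \<Rightarrow> 'b::euclidean_space"
  assumes "set_integrable lborel S f" shows "f absolutely_integrable_on S"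
  using assms unfolding set_integrable_def using integrable_completion borel_measurable_integrable by blast

lemma absint_compact:
  fixes f :: "'a::euclidean_space \<Rightarrow> 'b::euclidean_space"
  assumes "compact K" "continuous_on K f" shows "f absolutely_integrable_on K"
  using borel_integrable_compact[OF assms] by (intro absint_of_lborel) (simp add: set_integrable_def)

definition polar :: "complex \<Rightarrow> complex" where
  "polar c = of_real (Re c * cos (2*pi*Im c)) + \<i> * of_real (Re c * sin (2*pi*Im c))"

definition polar' :: "complex \<Rightarrow> complex \<Rightarrow> complex" where
  "polar' c h = of_real (Re h * cos (2*pi*Im c) - Re c * (2*pi*Im h) * sin (2*pi*Im c))
      + \<i> * of_real (Re h * sin (2*pi*Im c) + Re c * (2*pi*Im h) * cos (2*pi*Im c))"

lemma polar_der: "(polar has_derivative polar' c) (at c)"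
  unfolding polar_def polar'_def
  by (auto intro!: derivative_eq_intros simp: algebra_simps)

lemma jac_polar: "jac (polar' c) = 2 * pi * Re c"
proof -
  define \<theta> where "\<theta> = 2*pi*Im c"
  have "jac (polar' c) = 2*pi*Re c * (cos \<theta> * cos \<theta>) + 2*pi*Re c * (sin \<theta> * sin \<theta>)"
    by (simp add: jac_def polar'_def algebra_simps \<theta>_def)
  also have "\<dots> = 2*pi*Re c * (cos \<theta> * cos \<theta> + sin \<theta> * sin \<theta>)"
    by (simp only: distrib_left)
  also have "cos \<theta> * cos \<theta> + sin \<theta> * sin \<theta> = 1"
    using sin_cos_squared_add2[of \<theta>] by (simp only: power2_eq_square)
  finally show ?thesis by simp
qed

lemma polar_Complex: "polar (Complex r t) = of_real r * cis (2*pi*t)"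
  by (simp add: polar_def complex_eq_iff)

lemma polar_eq: "polar c = of_real (Re c) * cis (2*pi*Im c)"
  by (simp add: polar_def complex_eq_iff)

lemma norm_polar: "Re c \<ge> 0 \<Longrightarrow> norm (polar c) = Re c"
  by (simp add: polar_eq norm_mult)

lemma continuous_on_polar: "continuous_on A polar"
  unfolding polar_def by (intro continuous_intros)

lemma inj_polar: "inj_on polar (box 0 (Complex t 1))"
proof (rule inj_onI)
  fix x y assume x: "x \<in> box 0 (Complex t 1)" and y: "y \<in> box 0 (Complex t 1)" and eq: "polar x = polar y"
  have xr: "0 < Re x" "0 < Im x" "Im x < 1" and yr: "0 < Re y" "0 < Im y" "Im y < 1"
    using x y by (auto simp: in_box_complex_iff)
  have "Re x = Re y" using norm_polar[of x] norm_polar[of y] eq xr yr by simp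
  then have "cis (2*pi*Im x) = cis (2*pi*Im y)" using eq xr by (simp add: polar_eq)
  then have "exp (\<i> * of_real (2*pi*Im x)) = exp (\<i> * of_real (2*pi*Im y))" by (simp add: cis_conv_exp)
  then obtain n :: int where n: "\<i> * of_real (2*pi*Im x) = \<i> * of_real (2*pi*Im y) + (of_int (2 * n) * pi) * \<i>"
    unfolding exp_eq by blast
  then have "2*pi*Im x = 2*pi*Im y + 2 * n * pi"
    by (simp add: complex_eq_iff)
  then have "2*pi*(Im x - Im y - n) = 0" by (simp add: algebra_simps)
  then have "Im x - Im y = n" by simp
  moreover have "\<bar>Im x - Im y\<bar> < 1" using xr yr by auto
  ultimately have "n = 0" by linarith
  then have "Im x = Im y" using \<open>Im x - Im y = n\<close> by simp
  then show "x = y" using \<open>Re x = Re y\<close> by (simp add: complex_eq_iff)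
qed

lemma polar_image_sub: "polar ` box 0 (Complex t 1) \<subseteq> ball 0 t"
  by (auto simp: in_box_complex_iff norm_polar)

lemma polar_image_sup: "ball 0 t - polar ` box 0 (Complex t 1) \<subseteq> {x. \<i> \<bullet> x = 0}"
proof
  fix w assume w: "w \<in> ball 0 t - polar ` box 0 (Complex t 1)"
  show "w \<in> {x. \<i> \<bullet> x = 0}"
  proof (rule ccontr)
    assume "w \<notin> {x. \<i> \<bullet> x = 0}"
    then have imw: "Im w \<noteq> 0" by (simp add: inner_complex_def)
    then have w0: "w \<noteq> 0" by auto
    define \<theta> where "\<theta> = Arg w"
    have wr: "w = of_real (cmod w) * cis \<theta>" using rcis_cmod_Arg[of w] by (simp add: rcis_def \<theta>_def)
    have "Im w = cmod w * sin \<theta>" by (subst wr) simp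
    then have s: "sin \<theta> \<noteq> 0" using imw by auto
    have b: "-pi < \<theta>" "\<theta> \<le> pi" using Arg_bounded[of w] by (auto simp: \<theta>_def)
    have "\<theta> \<noteq> 0" "\<theta> \<noteq> pi" using s by auto
    define \<tau> where "\<tau> = (if \<theta> > 0 then \<theta> / (2*pi) else \<theta> / (2*pi) + 1)"
    have \<tau>: "0 < \<tau>" "\<tau> < 1"
      using b \<open>\<theta> \<noteq> 0\<close> \<open>\<theta> \<noteq> pi\<close> pi_gt_zero by (auto simp: \<tau>_def field_simps)
    have "cis (2*pi*\<tau>) = cis \<theta>"
    proof (cases "\<theta> > 0")
      case True then show ?thesis by (simp add: \<tau>_def)
    next
      case False
      then have "2*pi*\<tau> = \<theta> + 2*pi" by (simp add: \<tau>_def field_simps)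
      then show ?thesis by (simp add: cis.ctr complex_eq_iff)
    qed
    then have "polar (Complex (cmod w) \<tau>) = w" using wr by (simp add: polar_eq)
    moreover have "Complex (cmod w) \<tau> \<in> box 0 (Complex t 1)"
      using w w0 \<tau> by (auto simp: in_box_complex_iff)
    ultimately have "w \<in> polar ` box 0 (Complex t 1)" by (metis image_eqI)
    then show False using w by blast
  qed
qed

lemma polar_integral:
  fixes H :: "complex \<Rightarrow> complex"
  assumes t: "t > 0" and H: "continuous_on (cball 0 t) H"
  shows "H absolutely_integrable_on ball 0 t"
    "integral (ball 0 t) H = integral {0..t} (\<lambda>r. integral {0..1} (\<lambda>\<tau>. (2*pi*r) *\<^sub>R H (of_real r * cis (2*pi*\<tau>))))"
proof -
  define S where "S = box 0 (Complex t 1)"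
  have Hc: "H absolutely_integrable_on cball 0 t" by (rule absint_compact[OF compact_cball H])
  show Hb: "H absolutely_integrable_on ball 0 t"
    by (rule set_integrable_subset[OF Hc]) (auto simp: borel_open sets_completionI_sets)
  have neg1: "negligible {x \<in> ball 0 t - polar ` S. H x \<noteq> 0}"
    by (rule negligible_subset[OF negligible_hyperplane[of \<i> 0]]) (use polar_image_sup[of t] in \<open>auto simp: S_def\<close>)
  have neg2: "negligible {x \<in> polar ` S - ball 0 t. H x \<noteq> 0}"
  proof -
    have "{x \<in> polar ` S - ball 0 t. H x \<noteq> 0} = {}" using polar_image_sub[of t] by (auto simp: S_def)
    then show ?thesis by (metis negligible_empty)
  qed
  have HS: "H absolutely_integrable_on polar ` S"
    using Hb absolutely_integrable_spike_set_eq[OF neg1 neg2] by blast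
  have int_eq: "integral (ball 0 t) H = integral (polar ` S) H"
    by (rule integral_spike_set[OF neg1 neg2])
  have CV: "(\<lambda>x. \<bar>jac (polar' x)\<bar> *\<^sub>R H (polar x)) absolutely_integrable_on S \<and>
           integral S (\<lambda>x. \<bar>jac (polar' x)\<bar> *\<^sub>R H (polar x)) = integral (polar ` S) H"
    using cv_complex[of S polar polar' H "integral (polar ` S) H"] HS polar_der inj_polar
    by (simp add: S_def open_box)
  define \<Psi> where "\<Psi> = (\<lambda>x. \<bar>jac (polar' x)\<bar> *\<^sub>R H (polar x))"
  have "integral S \<Psi> = integral (cbox (Complex 0 0) (Complex t 1)) \<Psi>"
    by (simp add: S_def integral_open_interval zero_complex.code)
  also have "\<dots> = integral {0..t} (\<lambda>x. integral {0..1} (\<lambda>y. \<Psi> (Complex x y)))"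
  proof (rule integral_cbox_complex_fubini)
    have "polar ` cbox (Complex 0 0) (Complex t 1) \<subseteq> cball 0 t"
      by (auto simp: mem_cbox_complex norm_polar)
    then have "continuous_on (cbox (Complex 0 0) (Complex t 1)) (\<lambda>x. H (polar x))"
      by (intro continuous_on_compose2[OF H continuous_on_polar]) auto
    then show "continuous_on (cbox (Complex 0 0) (Complex t 1)) \<Psi>"
      unfolding \<Psi>_def jac_polar by (intro continuous_intros)
  qed
  also have "\<dots> = integral {0..t} (\<lambda>r. integral {0..1} (\<lambda>\<tau>. (2*pi*r) *\<^sub>R H (of_real r * cis (2*pi*\<tau>))))"
    by (intro integral_cong) (simp add: \<Psi>_def jac_polar polar_Complex)
  finally show "integral (ball 0 t) H = integral {0..t} (\<lambda>r. integral {0..1} (\<lambda>\<tau>. (2*pi*r) *\<^sub>R H (of_real r * cis (2*pi*\<tau>))))"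
    using CV int_eq by (simp add: \<Psi>_def)
qed




lemma circle_mean:
  fixes h :: "complex \<Rightarrow> complex"
  assumes h: "h holomorphic_on ball 0 R" and r: "0 \<le> r" "r < R"
  shows "integral {0..1} (\<lambda>\<tau>. h (of_real r * cis (2*pi*\<tau>))) = h 0"
proof (cases "r = 0")
  case True then show ?thesis by simp
next
  case False
  then have r0: "r > 0" using r by simp
  have "((\<lambda>w. h w / (w - 0)) has_contour_integral of_real (2 * pi) * \<i> * winding_number (circlepath 0 r) 0 * h 0) (circlepath 0 r)"
  proof (rule Cauchy_integral_formula_convex_simple[OF convex_ball h])
    show "0 \<in> interior (ball (0::complex) R)" using r by simp
    show "path_image (circlepath 0 r) \<subseteq> ball 0 R - {0}" using r r0 by auto
  qed auto
  then have "((\<lambda>w. h w / w) has_contour_integral 2 * pi * \<i> * h 0) (circlepath 0 r)"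
    using winding_number_circlepath_centre[OF r0] by simp
  then have 1: "((\<lambda>x. h (circlepath 0 r x) / circlepath 0 r x * vector_derivative (circlepath 0 r) (at x within {0..1}))
      has_integral 2 * pi * \<i> * h 0) {0..1}"
    unfolding has_contour_integral_def .
  have 2: "((\<lambda>\<tau>. (2 * pi * \<i>) * h (of_real r * cis (2*pi*\<tau>))) has_integral 2 * pi * \<i> * h 0) {0..1}"
  proof (rule has_integral_eq[OF _ 1])
    fix x :: real assume x: "x \<in> {0..1}"
    have e: "circlepath 0 r x = of_real r * cis (2*pi*x)"
      by (simp add: circlepath cis_conv_exp mult_ac)
    have ne: "circlepath 0 r x \<noteq> 0" using r0 by (simp add: e)
    show "h (circlepath 0 r x) / circlepath 0 r x * vector_derivative (circlepath 0 r) (at x within {0..1})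
      = (2 * pi * \<i>) * h (of_real r * cis (2*pi*x))"
    proof -
      have vd: "vector_derivative (circlepath 0 r) (at x within {0..1}) = 2 * pi * \<i> * r * exp(2 * of_real pi * \<i> * x)"
        using x by (intro vector_derivative_circlepath01) auto
      show ?thesis using ne unfolding vd by (simp add: e cis_conv_exp field_simps mult_ac)
    qed
  qed
  have "((\<lambda>\<tau>. h (of_real r * cis (2*pi*\<tau>))) has_integral h 0) {0..1}"
    using has_integral_mult_right[OF 2, of "1 / (2 * pi * \<i>)"] by simp
  then show ?thesis by (rule integral_unique)
qed

lemma radial_mean:
  fixes F :: "real \<Rightarrow> real" and h :: "complex \<Rightarrow> complex"
  assumes t: "0 < t" "t < R" and h: "h holomorphic_on ball 0 R" and F: "continuous_on {0..t} F"
  shows "(\<lambda>w. of_real (F (cmod w)) * h w) absolutely_integrable_on ball 0 t"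
    "integral (ball 0 t) (\<lambda>w. of_real (F (cmod w)) * h w) = of_real (integral {0..t} (\<lambda>r. 2*pi*r*F r)) * h 0"
proof -
  define H where "H = (\<lambda>w. of_real (F (cmod w)) * h w)"
  have hc: "continuous_on (cball 0 t) h"
    using holomorphic_on_imp_continuous_on[OF h] by (rule continuous_on_subset) (use t in auto)
  have Fc: "continuous_on (cball 0 t) (\<lambda>w. F (cmod w))"
    by (rule continuous_on_compose2[OF F]) (auto intro: continuous_intros)
  have Hc: "continuous_on (cball 0 t) H" unfolding H_def
    by (intro continuous_intros Fc hc)
  note P = polar_integral[OF t(1) Hc]
  show "(\<lambda>w. of_real (F (cmod w)) * h w) absolutely_integrable_on ball 0 t"
    using P(1) by (simp add: H_def)
  have "integral (ball 0 t) H = integral {0..t} (\<lambda>r. (2*pi*r*F r) *\<^sub>R h 0)"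
    unfolding P(2)
  proof (rule integral_cong)
    fix r assume r: "r \<in> {0..t}"
    have "integral {0..1} (\<lambda>\<tau>. (2*pi*r) *\<^sub>R H (of_real r * cis (2*pi*\<tau>)))
        = integral {0..1} (\<lambda>\<tau>. (2*pi*r*F r) *\<^sub>R h (of_real r * cis (2*pi*\<tau>)))"
      using r by (intro integral_cong) (simp add: H_def norm_mult scaleR_conv_of_real)
    also have "\<dots> = (2*pi*r*F r) *\<^sub>R h 0"
      using circle_mean[OF h, of r] r t by simp
    finally show "integral {0..1} (\<lambda>\<tau>. (2*pi*r) *\<^sub>R H (of_real r * cis (2*pi*\<tau>))) = (2*pi*r*F r) *\<^sub>R h 0" .
  qed
  also have "\<dots> = integral {0..t} (\<lambda>r. 2*pi*r*F r) *\<^sub>R h 0"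
  proof (rule integral_unique, rule has_integral_scaleR_left, rule integrable_integral)
    show "(\<lambda>r. 2*pi*r*F r) integrable_on {0..t}"
      by (intro integrable_continuous_real continuous_intros F)
  qed
  finally show "integral (ball 0 t) (\<lambda>w. of_real (F (cmod w)) * h w) = of_real (integral {0..t} (\<lambda>r. 2*pi*r*F r)) * h 0"
    by (simp add: H_def scaleR_conv_of_real)
qed




lemma mob_den_nz: "cmod z < 1 \<Longrightarrow> cmod w < 1 \<Longrightarrow> 1 - cnj z * w \<noteq> 0"
proof
  assume "cmod z < 1" "cmod w < 1" "1 - cnj z * w = 0"
  then have "cnj z * w = 1" by simp
  then have "cmod z * cmod w = 1" by (metis complex_mod_cnj norm_mult norm_one)
  moreover have "cmod z * cmod w < 1" using \<open>cmod z < 1\<close> \<open>cmod w < 1\<close>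
    by (metis mult_le_one le_less_trans norm_ge_zero less_imp_le mult_strict_mono' mult_1_right)
  ultimately show False by simp
qed

lemma cnj_mult_self: "cnj z * z = of_real ((cmod z)^2)"
  by (metis complex_norm_square mult.commute)

lemma mob_invol:
  assumes z: "cmod z < 1" and D: "1 - cnj z * w \<noteq> 0"
  shows "mobius z (mobius z w) = w"
proof -
  have zz: "1 - cnj z * z \<noteq> 0"
    using mob_den_nz[OF z z] .
  have 1: "z - mobius z w = w * (1 - cnj z * z) / (1 - cnj z * w)"
    using D unfolding mobius_def by (simp add: field_simps)
  have 2: "1 - cnj z * mobius z w = (1 - cnj z * z) / (1 - cnj z * w)"
    using D unfolding mobius_def by (simp add: field_simps)
  show ?thesis
    using D zz unfolding mobius_def[of z "mobius z w"] 1 2 by simp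
qed

lemma mob_norm:
  assumes D: "1 - cnj z * w \<noteq> 0"
  shows "1 - (cmod (mobius z w))^2 = (1 - (cmod z)^2) * (1 - (cmod w)^2) / (cmod (1 - cnj z * w))^2"
proof -
  have "(cmod (1 - cnj z * w))^2 - (cmod (z - w))^2 = (1 - (cmod z)^2) * (1 - (cmod w)^2)"
    unfolding cmod_power2 by (simp add: algebra_simps power2_eq_square)
  moreover have "(cmod (1 - cnj z * w))^2 \<noteq> 0" using D by simp
  ultimately show ?thesis unfolding mobius_def norm_divide power_divide
    by (simp add: field_simps)
qed

lemma mob_in_disk:
  assumes "cmod z < 1" "cmod w < 1" shows "cmod (mobius z w) < 1"
proof -
  have D: "1 - cnj z * w \<noteq> 0" using mob_den_nz assms by blast
  have "1 - (cmod (mobius z w))^2 > 0"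
    unfolding mob_norm[OF D] using assms D
    by (intro divide_pos_pos mult_pos_pos) (auto simp: power_less_one_iff abs_square_less_1)
  then have "(cmod (mobius z w))^2 < 1" by simp
  then show ?thesis by (simp add: abs_square_less_1)
qed

lemma mob_deriv:
  assumes D: "1 - cnj z * w \<noteq> 0"
  shows "(mobius z has_field_derivative ((cmod z)^2 - 1) / (1 - cnj z * w)^2) (at w)"
proof -
  have 1: "((\<lambda>x. (z - x) / (1 - cnj z * x)) has_field_derivative
        ((-1) * (1 - cnj z * w) - (z - w) * (- cnj z)) / (1 - cnj z * w)^2) (at w)"
    using D by (auto intro!: derivative_eq_intros simp: power2_eq_square)
  have e: "((-1) * (1 - cnj z * w) - (z - w) * (- cnj z)) = complex_of_real ((cmod z)^2 - 1)"
    by (simp add: algebra_simps) (metis complex_norm_square of_real_power)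
  show ?thesis using 1 unfolding e mobius_def .
qed

lemma jac_mult: "jac (\<lambda>h. d * h) = (cmod d)^2"
  unfolding cmod_power2 by (simp add: jac_def power2_eq_square)

lemma bergK_diag: "bergK x x = of_real (1 / (1 - (cmod x)^2)^2)"
  unfolding bergK_def complex_norm_square[symmetric] by simp

lemma mob_weight:
  assumes z: "cmod z < 1" and w: "cmod w < 1"
  shows "(cmod (((cmod z)^2 - 1) / (1 - cnj z * w)^2))^2 * (1 / (1 - (cmod (mobius z w))^2)^2)
       = 1 / (1 - (cmod w)^2)^2"
proof -
  have D: "1 - cnj z * w \<noteq> 0" using mob_den_nz z w by blast
  have zz: "1 - (cmod z)^2 > 0" using z by (simp add: abs_square_less_1)
  have ww: "1 - (cmod w)^2 > 0" using w by (simp add: abs_square_less_1)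
  have n: "cmod (((cmod z)^2 - 1) / (1 - cnj z * w)^2) = (1 - (cmod z)^2) / (cmod (1 - cnj z * w))^2"
  proof -
    have "cmod (complex_of_real ((cmod z)^2 - 1)) = 1 - (cmod z)^2" using zz by (simp only: norm_of_real)
    moreover have "complex_of_real ((cmod z)^2) - 1 = complex_of_real ((cmod z)^2 - 1)" by simp
    ultimately show ?thesis by (simp only: norm_divide norm_power)
  qed
  have gen: "((1 - a)/c)^2 * (1/((1-a)*(1-b)/c)^2) = 1/(1-b)^2"
    if "a < 1" "b < 1" "c \<noteq> 0" for a b c :: real
  proof -
    have u: "((1 - a)/c)^2 \<noteq> 0" using that by simp
    have "(1-a)*(1-b)/c = ((1-a)/c) * (1-b)" by simp
    then have "((1-a)*(1-b)/c)^2 = ((1-a)/c)^2 * (1-b)^2" by (metis power_mult_distrib)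
    then show ?thesis using u that by simp
  qed
  show ?thesis unfolding n mob_norm[OF D]
    by (rule gen) (use D zz ww in auto)
qed

lemma Tfun_mob:
  assumes "cmod z < 1" "cmod w < 1"
  shows "Tfun z (mobius z w) = (1 - cmod w) / (1 + cmod w)"
  using mob_invol[OF assms(1) mob_den_nz[OF assms]] by (simp add: Tfun_def)




definition Fw :: "real \<Rightarrow> real \<Rightarrow> real" where
  "Fw s r = ((1 - r) / (1 + r)) powr s / (1 - r^2)^2"

lemma mob_inj: "cmod z < 1 \<Longrightarrow> inj_on (mobius z) (ball 0 1)"
  by (rule inj_onI) (metis mob_invol mob_den_nz mem_ball_0)

lemma bergK_mob_holo:
  assumes z: "cmod z < 1" and y: "cmod y < 1"
  shows "(\<lambda>w. bergK (mobius z w) y) holomorphic_on ball 0 1"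
proof -
  have 1: "1 - cnj z * w \<noteq> 0" if "w \<in> ball 0 1" for w using mob_den_nz[OF z] that by simp
  have 2: "(1 - (z - w) / (1 - cnj z * w) * cnj y)^2 \<noteq> 0" if "w \<in> ball 0 1" for w
  proof -
    have "cmod (mobius z w) < 1" using mob_in_disk[OF z] that by simp
    then have "1 - cnj y * mobius z w \<noteq> 0" using mob_den_nz[OF y] by blast
    then show ?thesis by (simp add: mobius_def mult.commute)
  qed
  show ?thesis unfolding bergK_def mobius_def
    by (intro holomorphic_intros) (use 1 2 in auto)
qed

lemma Fw_cont: "t < 1 \<Longrightarrow> continuous_on {0..t} (Fw s)"
  unfolding Fw_def
  by (intro continuous_intros) (auto simp: abs_square_eq_1 divide_pos_pos)

lemma key:
  fixes s :: real
  assumes z: "cmod z < 1" and t: "0 < t" "t < 1" and y: "cmod y < 1"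
  shows "(\<lambda>x. of_real (Tfun z x powr s) * bergK x x * bergK x y) absolutely_integrable_on mobius z ` ball 0 t"
    "integral (mobius z ` ball 0 t) (\<lambda>x. of_real (Tfun z x powr s) * bergK x x * bergK x y)
       = of_real (integral {0..t} (\<lambda>r. 2*pi*r*Fw s r)) * bergK z y"
proof -
  define d where "d = (\<lambda>w. complex_of_real ((cmod z)^2 - 1) / (1 - cnj z * w)^2)"
  define f where "f = (\<lambda>x. of_real (Tfun z x powr s) * bergK x x * bergK x y)"
  define h where "h = (\<lambda>w. bergK (mobius z w) y)"
  have hh: "h holomorphic_on ball 0 1" unfolding h_def by (rule bergK_mob_holo[OF z y])
  note RM = radial_mean[OF t(1) t(2) hh Fw_cont[OF t(2)]]
  have h0: "h 0 = bergK z y" by (simp add: h_def mobius_def)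
  have pw: "\<bar>jac (\<lambda>u. d w * u)\<bar> *\<^sub>R f (mobius z w) = of_real (Fw s (cmod w)) * h w"
    if w: "w \<in> ball 0 t" for w
  proof -
    have w1: "cmod w < 1" using w t by simp
    have J: "\<bar>jac (\<lambda>u. d w * u)\<bar> = (cmod (d w))^2" by (simp add: jac_mult)
    have A: "f (mobius z w) = of_real (((1 - cmod w) / (1 + cmod w)) powr s * (1 / (1 - (cmod (mobius z w))^2)^2)) * h w"
      by (simp add: f_def h_def Tfun_mob[OF z w1] bergK_diag)
    have C: "(cmod (d w))^2 * (1 / (1 - (cmod (mobius z w))^2)^2) = 1 / (1 - (cmod w)^2)^2"
      using mob_weight[OF z w1] by (simp add: d_def)
    have B: "(cmod (d w))^2 * (((1 - cmod w) / (1 + cmod w)) powr s * (1 / (1 - (cmod (mobius z w))^2)^2)) = Fw s (cmod w)"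
    proof -
      have "(cmod (d w))^2 * (((1 - cmod w) / (1 + cmod w)) powr s * (1 / (1 - (cmod (mobius z w))^2)^2))
          = ((1 - cmod w) / (1 + cmod w)) powr s * ((cmod (d w))^2 * (1 / (1 - (cmod (mobius z w))^2)^2))"
        by (simp only: mult_ac)
      also have "\<dots> = Fw s (cmod w)" unfolding C Fw_def by simp
      finally show ?thesis .
    qed
    have "\<bar>jac (\<lambda>u. d w * u)\<bar> *\<^sub>R f (mobius z w) = of_real ((cmod (d w))^2 * (((1 - cmod w) / (1 + cmod w)) powr s * (1 / (1 - (cmod (mobius z w))^2)^2))) * h w"
      by (simp only: J A scaleR_conv_of_real of_real_mult mult.assoc)
    then show ?thesis by (simp only: B)
  qed
  have der: "(mobius z has_derivative (\<lambda>u. d w * u)) (at w)" if "w \<in> ball 0 t" for w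
  proof -
    have "1 - cnj z * w \<noteq> 0" using mob_den_nz[OF z] that t by simp
    from mob_deriv[OF this] show ?thesis unfolding has_field_derivative_def d_def .
  qed
  have inj: "inj_on (mobius z) (ball 0 t)"
    using mob_inj[OF z] by (rule inj_on_subset) (use t in auto)
  note CV = cv_complex[OF open_ball der inj, of f "of_real (integral {0..t} (\<lambda>r. 2*pi*r*Fw s r)) * h 0"]
  have "(\<lambda>w. \<bar>jac (\<lambda>u. d w * u)\<bar> *\<^sub>R f (mobius z w)) absolutely_integrable_on ball 0 t"
    using RM(1) by (subst set_integrable_cong[OF refl refl pw]) auto
  moreover have "integral (ball 0 t) (\<lambda>w. \<bar>jac (\<lambda>u. d w * u)\<bar> *\<^sub>R f (mobius z w)) =
      of_real (integral {0..t} (\<lambda>r. 2*pi*r*Fw s r)) * h 0"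
    using RM(2) by (subst integral_cong[OF pw]) auto
  ultimately have "f absolutely_integrable_on mobius z ` ball 0 t \<and>
     integral (mobius z ` ball 0 t) f = of_real (integral {0..t} (\<lambda>r. 2*pi*r*Fw s r)) * h 0"
    using CV by blast
  then show "(\<lambda>x. of_real (Tfun z x powr s) * bergK x x * bergK x y) absolutely_integrable_on mobius z ` ball 0 t"
    "integral (mobius z ` ball 0 t) (\<lambda>x. of_real (Tfun z x powr s) * bergK x x * bergK x y)
       = of_real (integral {0..t} (\<lambda>r. 2*pi*r*Fw s r)) * bergK z y"
    by (simp_all add: f_def h0)
qed




lemma cnj_measurable [measurable]: "cnj \<in> borel_measurable borel"
  by (intro borel_measurable_continuous_onI continuous_intros)

lemma U_alt:
  assumes z: "cmod z < 1" and t: "t \<le> 1"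
  shows "mobius z ` ball 0 t = {x \<in> ball 0 1. cmod (mobius z x) < t}"
proof (rule set_eqI)
  fix x show "x \<in> mobius z ` ball 0 t \<longleftrightarrow> x \<in> {x \<in> ball 0 1. cmod (mobius z x) < t}"
  proof
    assume "x \<in> mobius z ` ball 0 t"
    then obtain w where w: "cmod w < t" "x = mobius z w" by auto
    then have w1: "cmod w < 1" using t by simp
    have "cmod x < 1" using mob_in_disk[OF z w1] w by simp
    moreover have "mobius z x = w" using w mob_invol[OF z mob_den_nz[OF z w1]] by simp
    ultimately show "x \<in> {x \<in> ball 0 1. cmod (mobius z x) < t}" using w by simp
  next
    assume x: "x \<in> {x \<in> ball 0 1. cmod (mobius z x) < t}"
    then have x1: "cmod x < 1" by simp
    have "x = mobius z (mobius z x)" using mob_invol[OF z mob_den_nz[OF z x1]] by simp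
    then show "x \<in> mobius z ` ball 0 t" using x by auto
  qed
qed

lemma mob_cont: "cmod z < 1 \<Longrightarrow> continuous_on (ball 0 1) (mobius z)"
  unfolding mobius_def by (intro continuous_intros) (use mob_den_nz in auto)

lemma U_open:
  assumes z: "cmod z < 1" and t: "t \<le> 1"
  shows "open (mobius z ` ball 0 t)"
proof -
  have "mobius z ` ball 0 t = ball 0 1 \<inter> mobius z -` ball 0 t"
    unfolding U_alt[OF z t] by auto
  then show ?thesis using continuous_open_preimage[OF mob_cont[OF z] open_ball open_ball] by simp
qed

lemma U_eq:
  assumes z: "cmod z < 1" and N: "0 < N"
  shows "Uset N z = mobius z ` ball 0 ((exp N - 1) / (exp N + 1))"
proof -
  define t where "t = (exp N - 1) / (exp N + 1)"
  have e0: "exp N + 1 > 0" by (simp add: add_pos_pos)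
  have t1: "t \<le> 1" using e0 by (simp add: t_def divide_le_eq)
  have "hdist z x < N \<longleftrightarrow> cmod (mobius z x) < t" if x: "cmod x < 1" for x
  proof -
    define m where "m = cmod (mobius z x)"
    have m: "0 \<le> m" "m < 1" using mob_in_disk[OF z x] by (auto simp: m_def)
    have pos: "(1 + m) / (1 - m) > 0" using m by simp
    have "hdist z x < N \<longleftrightarrow> (1 + m) / (1 - m) < exp N"
      unfolding hdist_def m_def[symmetric] using pos by (metis exp_less_cancel_iff exp_ln)
    also have "\<dots> \<longleftrightarrow> 1 + m < exp N * (1 - m)" using m by (simp add: divide_less_eq)
    also have "\<dots> \<longleftrightarrow> m * (exp N + 1) < exp N - 1" by (simp add: algebra_simps)
    also have "\<dots> \<longleftrightarrow> m < t" unfolding t_def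
      by (simp add: pos_less_divide_eq add_pos_pos)
    finally show ?thesis by (simp add: m_def)
  qed
  then have "Uset N z = {x \<in> ball 0 1. cmod (mobius z x) < t}"
    by (auto simp: Uset_def unit_disk_def)
  also have "\<dots> = mobius z ` ball 0 t" using U_alt[OF z t1] by simp
  finally show ?thesis by (simp add: t_def)
qed

lemma U_bound:
  assumes z: "cmod z < 1" and t: "t < 1" and x: "x \<in> mobius z ` ball 0 t"
  shows "(cmod x)^2 \<le> 1 - (1 - (cmod z)^2) * (1 - t^2) / 4"
proof -
  obtain w where w: "cmod w < t" "x = mobius z w" using x by auto
  have w1: "cmod w < 1" using w t by simp
  have D: "1 - cnj z * w \<noteq> 0" using mob_den_nz[OF z w1] .
  have zz: "0 \<le> 1 - (cmod z)^2" using z by (simp add: abs_square_le_1)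
  have "cmod (1 - cnj z * w) \<le> 1 + cmod (cnj z * w)" by (metis norm_triangle_ineq4 norm_one)
  also have "\<dots> \<le> 2" using z w1 by (simp add: norm_mult) (metis mult_le_one norm_ge_zero less_imp_le one_add_one add_left_mono)
  finally have c2: "(cmod (1 - cnj z * w))^2 \<le> 4"
    using power_mono[of "cmod (1 - cnj z * w)" 2 2] by simp
  have ww: "1 - t^2 \<le> 1 - (cmod w)^2" using w by (simp add: power_mono)
  have c0: "0 < (cmod (1 - cnj z * w))^2" using D by simp
  have "(1 - (cmod z)^2) * (1 - t^2) / 4 \<le> (1 - (cmod z)^2) * (1 - (cmod w)^2) / 4"
    using ww zz by (simp add: mult_left_mono divide_right_mono)
  also have "\<dots> \<le> (1 - (cmod z)^2) * (1 - (cmod w)^2) / (cmod (1 - cnj z * w))^2"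
    using c2 c0 zz w1 by (intro divide_left_mono mult_nonneg_nonneg) (auto simp: abs_square_le_1)
  also have "\<dots> = 1 - (cmod x)^2" using mob_norm[OF D] w by simp
  finally show ?thesis by simp
qed

lemma bergK_bound:
  assumes d: "0 < \<delta>" and x: "(cmod x)^2 \<le> 1 - \<delta>" and y: "(cmod y)^2 \<le> 1 - \<delta>"
  shows "cmod (bergK x y) \<le> 1 / \<delta>^2"
proof -
  have "2 * (cmod x * cmod y) \<le> (cmod x)^2 + (cmod y)^2"
    using sum_squares_bound[of "cmod x" "cmod y"] by (simp add: power2_eq_square)
  then have xy: "cmod x * cmod y \<le> 1 - \<delta>" using x y by simp
  have "cmod (1 - x * cnj y) \<ge> 1 - cmod (x * cnj y)" by (metis norm_one norm_triangle_ineq2)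
  then have q: "cmod (1 - x * cnj y) \<ge> \<delta>" using xy by (simp add: norm_mult)
  then have "\<delta>^2 \<le> (cmod (1 - x * cnj y))^2" using d by (simp add: power_mono)
  then have "1 / (cmod (1 - x * cnj y))^2 \<le> 1 / \<delta>^2" using d by (simp add: frac_le)
  then show ?thesis by (simp add: bergK_def norm_divide norm_power)
qed

lemma Tfun_bound:
  assumes z: "cmod z < 1" and x: "cmod x < 1" and s: "0 \<le> s"
  shows "0 \<le> Tfun z x powr s" "Tfun z x powr s \<le> 1"
proof -
  have m: "cmod (mobius z x) < 1" by (rule mob_in_disk[OF z x])
  have m0: "0 \<le> cmod (mobius z x)" by simp
  have p: "0 < 1 + cmod (mobius z x)" using m0 by linarith
  have "0 \<le> Tfun z x" unfolding Tfun_def using m p by simp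
  moreover have "Tfun z x \<le> 1" unfolding Tfun_def using m0 p by (simp add: divide_le_eq)
  ultimately have "0 \<le> Tfun z x" "Tfun z x \<le> 1" by auto
  then show "0 \<le> Tfun z x powr s" "Tfun z x powr s \<le> 1" using s by (auto intro: powr_le1)
qed

lemma set_integrable_lborel_of_lebesgue:
  fixes f :: "'a::euclidean_space \<Rightarrow> 'b::euclidean_space"
  assumes "f absolutely_integrable_on A" "(\<lambda>y. indicator A y *\<^sub>R f y) \<in> borel_measurable borel"
  shows "set_integrable lborel A f"
proof -
  have "integrable lebesgue (\<lambda>y. indicator A y *\<^sub>R f y) = integrable lborel (\<lambda>y. indicator A y *\<^sub>R f y)"
    by (rule integrable_completion) (use assms(2) in simp)
  then show ?thesis using assms(1) unfolding set_integrable_def by simp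
qed




lemma cnj_bergK: "cnj (bergK x y) = bergK y x"
  by (simp add: bergK_def mult.commute)

lemma IN1_formula:
  fixes s :: real and z :: complex and N :: real
  assumes z: "cmod z < 1" and s: "0 \<le> s" and N: "0 < N"
  shows "I_N1 s z N = complex_of_real (4 / (1 - (cmod z)^2)^2 *
            (integral {0..(exp N - 1) / (exp N + 1)} (\<lambda>r. r * Fw s r))^2)"
proof -
  define t where "t = (exp N - 1) / (exp N + 1)"
  have e0: "exp N + 1 > 0" by (simp add: add_pos_pos)
  have t: "0 < t" "t < 1" using e0 N by (auto simp: t_def divide_less_eq)
  define U where "U = mobius z ` ball 0 t"
  have UN: "Uset N z = U" by (simp add: U_eq[OF z N] U_def t_def)
  have Uopen: "open U" unfolding U_def using U_open[OF z] t by simp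
  then have Usets: "U \<in> sets borel" by simp
  have Usub: "U \<subseteq> ball 0 1" unfolding U_def using U_alt[OF z] t by auto
  define \<delta> where "\<delta> = (1 - (cmod z)^2) * (1 - t^2) / 4"
  have \<delta>: "0 < \<delta>" using z t unfolding \<delta>_def
    by (intro divide_pos_pos mult_pos_pos) (auto simp: abs_square_less_1)
  have Ub: "(cmod x)^2 \<le> 1 - \<delta>" if "x \<in> U" for x
    using U_bound[OF z t(2)] that by (simp add: U_def \<delta>_def)
  define G where "G = (\<lambda>v. complex_of_real (Tfun z v powr s) * bergK v v)"
  define \<Phi> where "\<Phi> = (\<lambda>p::complex\<times>complex. complex_of_real (Tfun z (fst p) powr s * Tfun z (snd p) powr s)
      * bergK (fst p) (fst p) * bergK (snd p) (snd p) * bergK (fst p) (snd p))"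
  define A where "A = integral {0..t} (\<lambda>r. 2*pi*r*Fw s r)"
  have Phi_eq: "\<Phi> (x, y) = G x * (G y * bergK x y)" for x y
    by (simp add: \<Phi>_def G_def mult_ac)
  have \<Phi>meas: "\<Phi> \<in> borel_measurable (lborel \<Otimes>\<^sub>M lborel)"
    unfolding \<Phi>_def Tfun_def mobius_def bergK_def by measurable
  have \<Phi>bound: "norm (\<Phi> p) \<le> (1/\<delta>^2) * ((1/\<delta>^2) * (1/\<delta>^2))" if p: "p \<in> U \<times> U" for p
  proof -
    obtain x y where xy: "p = (x, y)" "x \<in> U" "y \<in> U" using p by auto
    have x1: "cmod x < 1" "cmod y < 1" using xy Usub by auto
    have T: "norm (complex_of_real (Tfun z x powr s * Tfun z y powr s)) \<le> 1"
    proof -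
      note a = Tfun_bound[OF z x1(1) s] and b = Tfun_bound[OF z x1(2) s]
      have "norm (complex_of_real (Tfun z x powr s * Tfun z y powr s)) = Tfun z x powr s * Tfun z y powr s"
        by (simp only: norm_of_real) (use a b in simp)
      also have "\<dots> \<le> 1" using a b by (intro mult_le_one) auto
      finally show ?thesis .
    qed
    have K1: "cmod (bergK x x) \<le> 1/\<delta>^2" by (rule bergK_bound[OF \<delta> Ub[OF xy(2)] Ub[OF xy(2)]])
    have K2: "cmod (bergK y y) \<le> 1/\<delta>^2" by (rule bergK_bound[OF \<delta> Ub[OF xy(3)] Ub[OF xy(3)]])
    have K3: "cmod (bergK x y) \<le> 1/\<delta>^2" by (rule bergK_bound[OF \<delta> Ub[OF xy(2)] Ub[OF xy(3)]])
    have "norm (\<Phi> p) = norm (complex_of_real (Tfun z x powr s * Tfun z y powr s)) * (cmod (bergK x x) * (cmod (bergK y y) * cmod (bergK x y)))"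
      by (simp add: \<Phi>_def xy norm_mult mult_ac)
    also have "\<dots> \<le> 1 * ((1/\<delta>^2) * ((1/\<delta>^2) * (1/\<delta>^2)))"
      using T K1 K2 K3 by (intro mult_mono) (auto intro: mult_nonneg_nonneg)
    finally show ?thesis by simp
  qed
  have UUsets: "U \<times> U \<in> sets (lborel \<Otimes>\<^sub>M lborel)" using Usets by (intro pair_measureI) auto
  have Ufin: "emeasure lborel U < \<infinity>"
    by (rule emeasure_bounded_finite) (rule bounded_subset[OF bounded_ball Usub])
  have UUfin: "emeasure (lborel \<Otimes>\<^sub>M lborel) (U \<times> U) < \<infinity>"
  proof -
    have "emeasure (lborel \<Otimes>\<^sub>M lborel) (U \<times> U) = emeasure lborel U * emeasure lborel U"
      using Usets by (intro lborel.emeasure_pair_measure_Times) auto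
    then show ?thesis using Ufin by (simp add: ennreal_mult_less_top)
  qed
  have int: "integrable (lborel \<Otimes>\<^sub>M lborel) (\<lambda>p. indicator (U \<times> U) p *\<^sub>R \<Phi> p)"
    by (rule integrableI_bounded_set_indicator[OF UUsets \<Phi>meas UUfin]) (use \<Phi>bound in auto)
  have sf: "sigma_finite_measure (density lborel (\<lambda>_::complex. ennreal (1 / pi)))"
    by (subst sigma_finite_measure.sigma_finite_iff_density_finite[OF lborel.sigma_finite_measure_axioms]) auto
  have dens: "dmu \<Otimes>\<^sub>M dmu = density (lborel \<Otimes>\<^sub>M lborel) (\<lambda>_. ennreal (1 / pi^2))"
  proof -
    have "dmu \<Otimes>\<^sub>M dmu = density (lborel \<Otimes>\<^sub>M lborel) (\<lambda>(x,y). ennreal (1/pi) * ennreal (1/pi))"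
      unfolding dmu_def
      by (rule pair_measure_density) (auto intro: sf lborel.sigma_finite_measure_axioms)
    also have "(\<lambda>(x::complex,y::complex). ennreal (1/pi) * ennreal (1/pi)) = (\<lambda>_. ennreal (1 / pi^2))"
      by (auto simp: ennreal_mult[symmetric] power2_eq_square)
    finally show ?thesis .
  qed
  have stepb: "I_N1 s z N = complex_of_real (1 / pi^2) * integral\<^sup>L (lborel \<Otimes>\<^sub>M lborel) (\<lambda>p. indicator (U \<times> U) p *\<^sub>R \<Phi> p)"
  proof -
    have "I_N1 s z N = integral\<^sup>L (density (lborel \<Otimes>\<^sub>M lborel) (\<lambda>_. ennreal (1 / pi^2))) (\<lambda>p. indicator (U \<times> U) p *\<^sub>R \<Phi> p)"
      unfolding I_N1_def UN dens set_lebesgue_integral_def \<Phi>_def ..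
    also have "\<dots> = integral\<^sup>L (lborel \<Otimes>\<^sub>M lborel) (\<lambda>p. (1 / pi^2) *\<^sub>R (indicator (U \<times> U) p *\<^sub>R \<Phi> p))"
      by (rule integral_density) (use UUsets \<Phi>meas in auto)
    also have "\<dots> = complex_of_real (1 / pi^2) * integral\<^sup>L (lborel \<Otimes>\<^sub>M lborel) (\<lambda>p. indicator (U \<times> U) p *\<^sub>R \<Phi> p)"
      by (simp add: scaleR_conv_of_real)
    finally show ?thesis .
  qed
  have KEYy: "(\<lambda>x. G x * bergK x y) absolutely_integrable_on U \<and> integral U (\<lambda>x. G x * bergK x y) = of_real A * bergK z y"
    if y: "cmod y < 1" for y
    using key[OF z t(1) t(2) y, of s] by (simp add: G_def U_def A_def)
  have Gmeas: "(\<lambda>y. indicator U y *\<^sub>R (G y * bergK x y)) \<in> borel_measurable borel" for x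
    using Usets unfolding G_def Tfun_def mobius_def bergK_def by measurable
  have cnjG: "cnj (G y) = G y" for y by (simp add: G_def bergK_diag)
  have sli: "set_integrable lborel U (\<lambda>y. G y * bergK x y)" and
    ig: "integral U (\<lambda>y. G y * bergK x y) = of_real A * bergK x z" if x1: "cmod x < 1" for x
  proof -
    define q where "q = (\<lambda>y. G y * bergK y x)"
    have q: "q absolutely_integrable_on U" "integral U q = of_real A * bergK z x"
      using KEYy[OF x1] by (simp_all add: q_def)
    have cq: "(\<lambda>y. G y * bergK x y) = cnj \<circ> q"
      by (auto simp: q_def cnjG cnj_bergK)
    have absi: "(\<lambda>y. G y * bergK x y) absolutely_integrable_on U"
      unfolding cq by (rule absolutely_integrable_linear[OF q(1) bounded_linear_cnj])
    show "set_integrable lborel U (\<lambda>y. G y * bergK x y)"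
      by (rule set_integrable_lborel_of_lebesgue[OF absi Gmeas])
    have "integral U (cnj \<circ> q) = cnj (integral U q)"
      by (rule integral_linear[OF set_lebesgue_integral_eq_integral(1)[OF q(1)] bounded_linear_cnj])
    then show "integral U (\<lambda>y. G y * bergK x y) = of_real A * bergK x z"
      unfolding cq q(2) by (simp add: cnj_bergK)
  qed
  have inner: "(\<integral>y. indicator (U \<times> U) (x, y) *\<^sub>R \<Phi> (x, y) \<partial>lborel) = indicator U x *\<^sub>R (G x * (of_real A * bergK x z))" for x
  proof (cases "x \<in> U")
    case False then show ?thesis by (simp add: indicator_times)
  next
    case True
    then have x1: "cmod x < 1" using Usub by auto
    have "(\<integral>y. indicator (U \<times> U) (x, y) *\<^sub>R \<Phi> (x, y) \<partial>lborel) = (\<integral>y. G x * (indicator U y *\<^sub>R (G y * bergK x y)) \<partial>lborel)"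
      using True by (intro Bochner_Integration.integral_cong) (auto simp: indicator_times Phi_eq)
    also have "\<dots> = G x * (\<integral>y. indicator U y *\<^sub>R (G y * bergK x y) \<partial>lborel)"
      by (rule integral_mult_right_zero)
    also have "(\<integral>y. indicator U y *\<^sub>R (G y * bergK x y) \<partial>lborel) = integral U (\<lambda>y. G y * bergK x y)"
      using set_borel_integral_eq_integral(2)[OF sli[OF x1]] by (simp add: set_lebesgue_integral_def)
    finally show ?thesis using True ig[OF x1] by simp
  qed
  have "integral\<^sup>L (lborel \<Otimes>\<^sub>M lborel) (\<lambda>p. indicator (U \<times> U) p *\<^sub>R \<Phi> p)
      = (\<integral>x. (\<integral>y. indicator (U \<times> U) (x, y) *\<^sub>R \<Phi> (x, y) \<partial>lborel) \<partial>lborel)"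
    using lborel_pair.integral_fst'[OF int] by simp
  also have "\<dots> = (\<integral>x. of_real A * (indicator U x *\<^sub>R (G x * bergK x z)) \<partial>lborel)"
    unfolding inner by (intro Bochner_Integration.integral_cong) (auto simp: indicator_def)
  also have "\<dots> = of_real A * (\<integral>x. indicator U x *\<^sub>R (G x * bergK x z) \<partial>lborel)"
    by (rule integral_mult_right_zero)
  also have "(\<integral>x. indicator U x *\<^sub>R (G x * bergK x z) \<partial>lborel) = of_real A * bergK z z"
  proof -
    have m: "(\<lambda>x. indicator U x *\<^sub>R (G x * bergK x z)) \<in> borel_measurable borel"
      using Usets unfolding G_def Tfun_def mobius_def bergK_def by measurable
    have sl: "set_integrable lborel U (\<lambda>x. G x * bergK x z)"
      by (rule set_integrable_lborel_of_lebesgue[OF conjunct1[OF KEYy[OF z]] m])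
    show ?thesis
      using set_borel_integral_eq_integral(2)[OF sl] conjunct2[OF KEYy[OF z]] by (simp add: set_lebesgue_integral_def)
  qed
  finally have stepf: "integral\<^sup>L (lborel \<Otimes>\<^sub>M lborel) (\<lambda>p. indicator (U \<times> U) p *\<^sub>R \<Phi> p) = of_real A * (of_real A * bergK z z)" .
  define J where "J = integral {0..t} (\<lambda>r. r * Fw s r)"
  have AJ: "A = 2 * pi * J"
  proof -
    have "A = integral {0..t} (\<lambda>r. (2*pi) *\<^sub>R (r * Fw s r))" unfolding A_def by (simp add: mult.assoc)
    then show ?thesis unfolding J_def by simp
  qed
  show ?thesis
    unfolding stepb stepf AJ bergK_diag t_def[symmetric] J_def[symmetric]
    by (simp add: field_simps power2_eq_square)
qed




definition fr :: "real \<Rightarrow> real \<Rightarrow> real" where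
  "fr s r = (1 - r) powr (s - 2) / (1 + r) powr (s + 2) * r"

lemma r_Fw: assumes "0 \<le> r" "r < 1" shows "r * Fw s r = fr s r"
proof -
  have a: "0 < 1 - r" "0 < 1 + r" using assms by auto
  have p1: "(1 - r) powr (s - 2) = (1 - r) powr s / (1 - r)^2"
    using a by (simp add: powr_diff powr_numeral)
  have p2: "(1 + r) powr (s + 2) = (1 + r) powr s * (1 + r)^2"
    using a by (simp add: powr_add powr_numeral)
  have q: "1 - r^2 = (1 - r) * (1 + r)" by (simp add: algebra_simps power2_eq_square)
  show ?thesis unfolding Fw_def fr_def p1 p2 q powr_divide
    using a by (simp add: field_simps power2_eq_square)
qed

lemma fr_meas [measurable]: "fr s \<in> borel_measurable borel"
  unfolding fr_def by measurable

lemma fr_int: assumes s: "1 < s" shows "set_integrable lborel {0..1} (fr s)"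
proof -
  define g where "g = (\<lambda>x::real. (1 - x) powr (s - 2))"
  have "((\<lambda>x. x powr (s - 2)) has_integral (1 powr (s - 2 + 1) / (s - 2 + 1))) {0..1}"
    by (rule has_integral_powr_from_0) (use s in auto)
  then have "((\<lambda>x. (- x) powr (s - 2)) has_integral (1 / (s - 1))) {-1..0}"
    using has_integral_reflect_real[of "\<lambda>x. x powr (s - 2)" _ 1 0] by simp
  then have "(((\<lambda>x. (- x) powr (s - 2)) \<circ> ((+) (-1))) has_integral (1 / (s - 1))) {0..1}"
    using has_integral_shift_Icc_real[of "\<lambda>x. (- x) powr (s - 2)" "-1" _ 0 1] by simp
  then have gi: "(g has_integral (1 / (s - 1))) {0..1}" by (simp add: g_def o_def)
  have ga: "g absolutely_integrable_on {0..1}"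
    by (rule nonnegative_absolutely_integrable_1) (use gi in \<open>auto simp: g_def\<close>)
  have gm: "(\<lambda>x. indicator {0..1} x *\<^sub>R g x) \<in> borel_measurable borel"
    unfolding g_def by measurable
  have gl: "set_integrable lborel {0..1} g" by (rule set_integrable_lborel_of_lebesgue[OF ga gm])
  show ?thesis unfolding set_integrable_def
  proof (rule Bochner_Integration.integrable_bound[OF gl[unfolded set_integrable_def]])
    show "(\<lambda>x. indicator {0..1} x *\<^sub>R fr s x) \<in> borel_measurable lborel" by measurable
    show "AE x in lborel. norm (indicator {0..1} x *\<^sub>R fr s x) \<le> norm (indicator {0..1} x *\<^sub>R g x)"
    proof (intro AE_I2)
      fix x :: real
      show "norm (indicator {0..1} x *\<^sub>R fr s x) \<le> norm (indicator {0..1} x *\<^sub>R g x)"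
      proof (cases "x \<in> {0..1}")
        case True
        then have x: "0 \<le> x" "x \<le> 1" by auto
        have d: "1 \<le> (1 + x) powr (s + 2)" using x s by (intro ge_one_powr_ge_zero) auto
        have "fr s x \<le> (1 - x) powr (s - 2)"
        proof -
          have "fr s x \<le> (1 - x) powr (s - 2) / (1 + x) powr (s + 2)"
            unfolding fr_def using x by (intro mult_left_le) auto
          also have "\<dots> \<le> (1 - x) powr (s - 2)"
            using divide_left_mono[OF d, of "(1 - x) powr (s - 2)"] d x by simp
          finally show ?thesis .
        qed
        moreover have "0 \<le> fr s x" unfolding fr_def using x by simp
        ultimately show ?thesis using True by (simp add: g_def)
      qed simp
    qed
  qed
qed




lemma tN_lim: "filterlim (\<lambda>N::real. (exp N - 1) / (exp N + 1)) (at_left 1) at_top"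
  by real_asymp

theorem lemma2p3:
  fixes s :: real and z :: complex
  assumes "1 < s" and "s < 3/2" and "z \<in> unit_disk"
  shows "((\<lambda>N. I_N1 s z N) \<longlongrightarrow>
           complex_of_real (4 / (1 - (cmod z)\<^sup>2)\<^sup>2 *
             (LINT r : {0<..<1} | lborel. (1 - r) powr (s - 2) / (1 + r) powr (s + 2) * r)\<^sup>2))
         at_top"
proof -
  have z: "cmod z < 1" using assms(3) by (simp add: unit_disk_def)
  have s0: "0 \<le> s" using assms(1) by simp
  have int01: "set_integrable lborel {0..<1} (fr s)"
    by (rule set_integrable_subset[OF fr_int[OF assms(1)]]) auto
  have T1: "((\<lambda>b. LINT x:{0..b}|lborel. fr s x) \<longlongrightarrow> (LINT x:{0..<1}|lborel. fr s x)) (at_left 1)"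
    by (rule tendsto_set_lebesgue_integral_at_left[OF _ _ int01]) auto
  have E1: "(LINT x:{0..<1}|lborel. fr s x) = (LINT r:{0<..<1}|lborel. (1 - r) powr (s - 2) / (1 + r) powr (s + 2) * r)"
    unfolding set_lebesgue_integral_def
    by (intro Bochner_Integration.integral_cong) (auto simp: indicator_def fr_def)
  have T3: "((\<lambda>N. LINT x:{0..(exp N - 1) / (exp N + 1)}|lborel. fr s x) \<longlongrightarrow> (LINT x:{0..<1}|lborel. fr s x)) at_top"
    using filterlim_compose[OF T1 tN_lim] .
  have T4: "((\<lambda>N. complex_of_real (4 / (1 - (cmod z)\<^sup>2)\<^sup>2 * (LINT x:{0..(exp N - 1) / (exp N + 1)}|lborel. fr s x)\<^sup>2))
      \<longlongrightarrow> complex_of_real (4 / (1 - (cmod z)\<^sup>2)\<^sup>2 * (LINT x:{0..<1}|lborel. fr s x)\<^sup>2)) at_top"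
    by (intro tendsto_of_real tendsto_mult tendsto_const tendsto_power T3)
  have ev: "\<forall>\<^sub>F N in at_top. complex_of_real (4 / (1 - (cmod z)\<^sup>2)\<^sup>2 * (LINT x:{0..(exp N - 1) / (exp N + 1)}|lborel. fr s x)\<^sup>2) = I_N1 s z N"
    using eventually_gt_at_top[of 0]
  proof eventually_elim
    case (elim N)
    define t where "t = (exp N - 1) / (exp N + 1)"
    have e0: "exp N + 1 > 0" by (simp add: add_pos_pos)
    have t: "0 < t" "t < 1" using e0 elim by (auto simp: t_def divide_less_eq)
    have "integral {0..t} (\<lambda>r. r * Fw s r) = integral {0..t} (fr s)"
      by (intro integral_cong r_Fw) (use t in auto)
    also have "\<dots> = (LINT x:{0..t}|lborel. fr s x)"
      by (rule set_borel_integral_eq_integral(2)[symmetric], rule set_integrable_subset[OF fr_int[OF assms(1)]]) (use t in auto)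
    finally show ?case using IN1_formula[OF z s0 elim] by (simp add: t_def)
  qed
  show ?thesis using Lim_transform_eventually[OF T4 ev] unfolding E1 .
qed


end
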